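(* For any instance oracle $f$ with $\max\{|f(G,v)|: G \text{ an } n\text{-node graph}, v\in G\}=O(n)$ and any deterministic exploration algorithm $A$, there exist a constant $c>0$ and infinitely many $n$ such that for each of them some $n$-node graph $G$ and starting node $v$ force the agent executing $A$ with input $f(G,v)$ from $v$ to make at least $c n^2$ edge traversals before completing exploration. That is, exploration takes time $\Omega(n^2)$ on some $n$-node graph, for arbitrarily large $n$.
   Context: Model: a graph is a simple connected undirected graph with $n$ nodes. Nodes are unlabeled; at each node of degree $d$ the incident edges carry distinct port numbers $0,\dots,d-1$, arbitrarily assigned. A mobile agent starts at some node. At each step, located at a node $u$ whose degree it knows, it chooses a port at $u$ and traverses the corresponding edge to a neighbor $w$; upon arrival it learns the port number of this edge at $w$ and the degree of $w$. The agent must visit all nodes and stop; the time of exploration is the number of edge traversals. A deterministic exploration algorithm receives as input a binary string (advice); its size is its length. An instance oracle is a function assigning a binary string $f(G,v)$ to each pair $(G,v)$ where $G$ is a port-numbered graph and $v$ is the starting node of the agent. *)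

theory Defs
  imports Complex_Main
begin

text \<open>Nodes are 0..<gsize G (labels are invisible to the agent).
  gdeg G u is the degree of u; gport G u p = (w, q) means that the edge with port p at u
  leads to w and has port q at w.\<close>

record pgraph =
  gsize :: nat
  gdeg  :: "nat \<Rightarrow> nat"
  gport :: "nat \<Rightarrow> nat \<Rightarrow> nat \<times> nat"

definition adj_rel :: "pgraph \<Rightarrow> (nat \<times> nat) set" where
  "adj_rel G = {(u, w). u < gsize G \<and> (\<exists>p < gdeg G u. fst (gport G u p) = w)}"

definition valid_pgraph :: "pgraph \<Rightarrow> bool" where
  "valid_pgraph G \<longleftrightarrow>
     (\<forall>u < gsize G. \<forall>p < gdeg G u.
        fst (gport G u p) < gsize G \<and> fst (gport G u p) \<noteq> u \<and>
        snd (gport G u p) < gdeg G (fst (gport G u p)) \<and>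
        gport G (fst (gport G u p)) (snd (gport G u p)) = (u, p)) \<and>
     (\<forall>u < gsize G. \<forall>p < gdeg G u. \<forall>p' < gdeg G u.
        fst (gport G u p) = fst (gport G u p') \<longrightarrow> p = p') \<and>
     (\<forall>u < gsize G. \<forall>w < gsize G. (u, w) \<in> (adj_rel G)\<^sup>*)"

text \<open>A deterministic exploration algorithm: given the advice, the degree of the starting
  node and the history of observations (port taken, port of arrival, degree of arrival node),
  it either stops (None) or chooses a port (Some p).\<close>
type_synonym algorithm = "bool list \<Rightarrow> nat \<Rightarrow> (nat \<times> nat \<times> nat) list \<Rightarrow> nat option"

fun walk :: "algorithm \<Rightarrow> bool list \<Rightarrow> pgraph \<Rightarrow> nat \<Rightarrow> nat \<Rightarrow> nat \<times> (nat \<times> nat \<times> nat) list" where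
  "walk A x G v 0 = (v, [])"
| "walk A x G v (Suc k) =
     (let (u, h) = walk A x G v k in
      case A x (gdeg G v) h of
        None \<Rightarrow> (u, h)
      | Some p \<Rightarrow>
          (if p < gdeg G u then
             (fst (gport G u p), h @ [(p, snd (gport G u p), gdeg G (fst (gport G u p)))])
           else (u, h)))"

definition completes_exploration ::
  "algorithm \<Rightarrow> bool list \<Rightarrow> pgraph \<Rightarrow> nat \<Rightarrow> nat \<Rightarrow> bool" where
  "completes_exploration A x G v t \<longleftrightarrow>
     (\<forall>k < t. case A x (gdeg G v) (snd (walk A x G v k)) of
                None \<Rightarrow> False
              | Some p \<Rightarrow> p < gdeg G (fst (walk A x G v k))) \<and>
     A x (gdeg G v) (snd (walk A x G v t)) = None \<and>
     {0..<gsize G} \<subseteq> {fst (walk A x G v k) | k. k \<le> t}"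

end

theory Submission
  imports Defs
begin


definition gp :: "nat \<Rightarrow> nat list \<Rightarrow> pgraph" where
 "gp m p = \<lparr>gsize = 3*m, gdeg = (\<lambda>u. if u < 2*m then m else 2),
   gport = (\<lambda>u c. if u < m then (if c = p!u then (2*m+u, 0) else (m + (c + m - u) mod m, c))
              else if u < 2*m then (if c = p!((c + m - (u-m)) mod m) then (2*m+(c + m - (u-m)) mod m, 1)
                                    else ((c + m - (u-m)) mod m, c))
              else (if c = 0 then (u - 2*m, p!(u-2*m)) else (m + (p!(u-2*m) + m - (u-2*m)) mod m, p!(u-2*m))))\<rparr>"

lemma modinv: "i < m \<Longrightarrow> c < (m::nat) \<Longrightarrow> (c + m - (c + m - i) mod m) mod m = i"
proof (cases "i \<le> c")
  case True
  assume a: "i < m" "c < m"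
  have "(c + m - i) mod m = c - i" using True a
    by (simp add: le_mod_geq)
  then show ?thesis using True a by simp
next
  case False
  assume a: "i < m" "c < m"
  have "(c + m - i) mod m = c + m - i" using False a by simp
  then show ?thesis using False a by simp
qed

lemma modlt: "0 < (m::nat) \<Longrightarrow> (a::nat) mod m < m" by simp

lemma modinv2: "i < m \<Longrightarrow> c < (m::nat) \<Longrightarrow> ((c + m - i) mod m + i) mod m = c"
proof (cases "i \<le> c")
  case True
  assume a: "i < m" "c < m"
  have "(c + m - i) mod m = c - i" using True a by (simp add: le_mod_geq)
  then show ?thesis using True a by simp
next
  case False
  assume a: "i < m" "c < m"
  have "(c + m - i) mod m = c + m - i" using False a by simp
  then show ?thesis using False a by simp
qed

lemma modinj: "i < m \<Longrightarrow> c < (m::nat) \<Longrightarrow> c' < m \<Longrightarrow> (c + m - i) mod m = (c' + m - i) mod m \<Longrightarrow> c = c'"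
  by (metis modinv2)


locale gpl =
  fixes m :: nat and p :: "nat list"
  assumes mpos: "0 < m" and lenp: "length p = m" and pm: "\<And>i. i < m \<Longrightarrow> p!i < m"
begin

abbreviation "G \<equiv> gp m p"

lemma gsz[simp]: "gsize G = 3*m" by (simp add: gp_def)
lemma gdg[simp]: "gdeg G u = (if u < 2*m then m else 2)" by (simp add: gp_def)

lemma gpl_left: "u < m \<Longrightarrow> gport G u c = (if c = p!u then (2*m+u, 0) else (m + (c + m - u) mod m, c))"
  by (simp add: gp_def)
lemma gpl_right: "m \<le> u \<Longrightarrow> u < 2*m \<Longrightarrow> gport G u c = (if c = p!((c + m - (u-m)) mod m) then (2*m+(c + m - (u-m)) mod m, 1)
                                    else ((c + m - (u-m)) mod m, c))"
  by (simp add: gp_def)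
lemma gpl_sub: "2*m \<le> u \<Longrightarrow> gport G u c = (if c = 0 then (u - 2*m, p!(u-2*m)) else (m + (p!(u-2*m) + m - (u-2*m)) mod m, p!(u-2*m)))"
  by (simp add: gp_def)

lemma modlt1: "(a::nat) mod m < m" using mpos by simp

lemma inv_left: assumes "u < m" "c < m"
  shows "fst (gport G u c) < 3*m \<and> fst (gport G u c) \<noteq> u \<and>
        snd (gport G u c) < gdeg G (fst (gport G u c)) \<and>
        gport G (fst (gport G u c)) (snd (gport G u c)) = (u, c)"
proof (cases "c = p!u")
  case True
  have e1: "gport G u c = (2*m+u, 0)" using True assms by (simp add: gpl_left)
  have e2: "gport G (2*m+u) 0 = (u, c)" using True assms by (simp add: gpl_sub)
  show ?thesis using assms by (simp add: e1 e2)
next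
  case False
  define j where "j = (c + m - u) mod m"
  have j: "j < m" using modlt1 j_def by simp
  have e1: "gport G u c = (m+j, c)" using assms False by (simp add: gpl_left j_def)
  have ij: "(c + m - j) mod m = u" using assms j_def modinv by simp
  have e2: "gport G (m+j) c = (u, c)"
    using assms False j ij by (simp add: gpl_right)
  show ?thesis using assms j by (simp add: e1 e2)
qed

lemma inv_right: assumes "m \<le> u" "u < 2*m" "c < m"
  shows "fst (gport G u c) < 3*m \<and> fst (gport G u c) \<noteq> u \<and>
        snd (gport G u c) < gdeg G (fst (gport G u c)) \<and>
        gport G (fst (gport G u c)) (snd (gport G u c)) = (u, c)"
proof -
  define j where "j = u - m"
  have u: "u = m + j" and jm: "j < m" using assms j_def by auto
  define i where "i = (c + m - j) mod m"
  have im: "i < m" using modlt1 i_def by simp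
  have bk: "(c + m - i) mod m = j" using i_def jm assms modinv by simp
  have uu: "(c + m - (u-m)) mod m = i" using i_def u by simp
  have h0: "gport G u c = (if c = p!i then (2*m+i, 1) else (i, c))"
    by (simp only: gpl_right[OF assms(1,2)] uu)
  show ?thesis
  proof (cases "c = p!i")
    case True
    have e1: "gport G u c = (2*m+i, 1)" using True h0 by simp
    have e2: "gport G (2*m+i) 1 = (u, c)" using True assms bk u by (simp add: gpl_sub)
    show ?thesis unfolding e1 fst_conv snd_conv e2 using im u jm by simp
  next
    case False
    have e1: "gport G u c = (i, c)" using False h0 by simp
    have e2: "gport G i c = (u, c)" using False assms bk u im by (simp add: gpl_left)
    show ?thesis using im assms by (simp add: e1 e2)
  qed
qed

lemma inv_sub: assumes "2*m \<le> u" "u < 3*m" "c < 2"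
  shows "fst (gport G u c) < 3*m \<and> fst (gport G u c) \<noteq> u \<and>
        snd (gport G u c) < gdeg G (fst (gport G u c)) \<and>
        gport G (fst (gport G u c)) (snd (gport G u c)) = (u, c)"
proof -
  define i where "i = u - 2*m"
  have u: "u = 2*m + i" and im: "i < m" using assms i_def by auto
  have pim: "p!i < m" using pm im by simp
  define j where "j = (p!i + m - i) mod m"
  have jm: "j < m" using modlt1 j_def by simp
  have bk: "(p!i + m - j) mod m = i" using modinv im pim j_def by simp
  show ?thesis
  proof (cases "c = 0")
    case True
    have e1: "gport G u c = (i, p!i)" using True assms by (simp add: gpl_sub i_def)
    have e2: "gport G i (p!i) = (u, c)" using True im u by (simp add: gpl_left)
    show ?thesis using im pim assms by (simp add: e1 e2)
  next
    case False
    then have c1: "c = 1" using assms by simp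
    have e1: "gport G u c = (m+j, p!i)" using c1 assms by (simp add: gpl_sub i_def j_def)
    have e2: "gport G (m+j) (p!i) = (u, c)" using c1 im jm bk u by (simp add: gpl_right)
    show ?thesis using jm pim assms by (simp add: e1 e2)
  qed
qed

lemma inv_all: assumes "u < 3*m" "c < gdeg G u"
  shows "fst (gport G u c) < 3*m \<and> fst (gport G u c) \<noteq> u \<and>
        snd (gport G u c) < gdeg G (fst (gport G u c)) \<and>
        gport G (fst (gport G u c)) (snd (gport G u c)) = (u, c)"
  using assms inv_left inv_right inv_sub
  by (cases "u < m"; cases "u < 2*m"; simp)

lemma simple_all: assumes "u < 3*m" "c < gdeg G u" "c' < gdeg G u"
  "fst (gport G u c) = fst (gport G u c')" shows "c = c'"
proof -
  consider "u < m" | "m \<le> u \<and> u < 2*m" | "2*m \<le> u" by linarith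
  then show ?thesis
  proof cases
    case 1
    then have cc: "c < m" "c' < m" using assms by auto
    have A: "fst (gport G u x) = (if x = p!u then 2*m+u else m + (x + m - u) mod m)" for x
      using 1 by (simp add: gpl_left)
    have "(c + m - u) mod m \<noteq> m + u" "(c' + m - u) mod m \<noteq> m + u" using modlt1
      by (metis add_lessD1 less_irrefl_nat)+
    then show ?thesis using assms(4) 1 modinj[OF 1 cc] unfolding A by (auto split: if_splits)
  next
    case 2
    then have cc: "c < m" "c' < m" using assms by auto
    define j where "j = u - m"
    have jm: "j < m" using 2 j_def by auto
    have A: "fst (gport G u x) = (if x = p!((x + m - j) mod m) then 2*m+(x + m - j) mod m else (x + m - j) mod m)" for x
      using 2 by (simp add: gpl_right j_def)
    have "(c + m - j) mod m \<noteq> 2*m + (c' + m - j) mod m" "(c' + m - j) mod m \<noteq> 2*m + (c + m - j) mod m" using modlt1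
      by (metis add_lessD1 less_irrefl_nat mult_2 trans_less_add1)+
    then show ?thesis using assms(4) modinj[OF jm cc] unfolding A by (auto split: if_splits)
  next
    case 3
    then have cc: "c < 2" "c' < 2" using assms by auto
    define i where "i = u - 2*m"
    have im: "i < m" using 3 assms i_def by auto
    have A: "fst (gport G u x) = (if x = 0 then i else m + (p!i + m - i) mod m)" for x
      using 3 by (simp add: gpl_sub i_def)
    show ?thesis using assms(4) cc im unfolding A by (auto split: if_splits)
  qed
qed

lemma adj: "u < 3*m \<Longrightarrow> c < gdeg G u \<Longrightarrow> (u, fst (gport G u c)) \<in> adj_rel G"
  unfolding adj_rel_def by auto

lemma adj_sym: "(u, w) \<in> adj_rel G \<Longrightarrow> (w, u) \<in> adj_rel G"
proof -
  assume "(u, w) \<in> adj_rel G"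
  then obtain c where u: "u < 3*m" and c: "c < gdeg G u" and w: "fst (gport G u c) = w"
    unfolding adj_rel_def by auto
  from inv_all[OF u c] w have "w < 3*m" "snd (gport G u c) < gdeg G w" "fst (gport G w (snd (gport G u c))) = u"
    by auto
  then show ?thesis unfolding adj_rel_def by auto
qed

lemma reach_right: "j < m \<Longrightarrow> (0, m+j) \<in> (adj_rel G)\<^sup>*"
proof -
  assume jm: "j < m"
  show ?thesis
  proof (cases "j = p!0")
    case False
    have "fst (gport G 0 j) = m + j" using False mpos jm by (simp add: gpl_left)
    have "(0, m+j) \<in> adj_rel G" using adj[of 0 j] mpos jm \<open>fst (gport G 0 j) = m + j\<close> by simp
    then show ?thesis by simp
  next
    case True
    have e1: "fst (gport G 0 j) = 2*m" using True mpos by (simp add: gpl_left)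
    have e2: "fst (gport G (2*m) 1) = m + j" using True mpos jm by (simp add: gpl_sub)
    have a1: "(0, 2*m) \<in> adj_rel G" using adj[of 0 j] e1 mpos jm by simp
    have a2: "(2*m, m+j) \<in> adj_rel G" using adj[of "2*m" 1] e2 mpos by simp
    show ?thesis using a1 a2 by (meson converse_rtrancl_into_rtrancl r_into_rtrancl)
  qed
qed

lemma reach_left: "i < m \<Longrightarrow> (0, i) \<in> (adj_rel G)\<^sup>*"
proof -
  assume im: "i < m"
  have r0: "(0, m) \<in> (adj_rel G)\<^sup>*" using reach_right[of 0] mpos by simp
  have ii: "(i + m - (m - m)) mod m = i" using im by simp
  show ?thesis
  proof (cases "i = p!i")
    case False
    have "fst (gport G m i) = i" using False mpos im ii by (simp add: gpl_right)
    then have "(m, i) \<in> adj_rel G" using adj[of m i] mpos im by simp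
    then show ?thesis using r0 by simp
  next
    case True
    have e1: "fst (gport G m i) = 2*m+i" using True mpos im ii by (simp add: gpl_right)
    have e2: "fst (gport G (2*m+i) 0) = i" by (simp add: gpl_sub)
    have a1: "(m, 2*m+i) \<in> adj_rel G" using adj[of m i] e1 mpos im by simp
    have a2: "(2*m+i, i) \<in> adj_rel G" using adj[of "2*m+i" 0] e2 im by simp
    show ?thesis using r0 a1 a2 by (meson rtrancl_into_rtrancl)
  qed
qed

lemma reach_all: "u < 3*m \<Longrightarrow> (0, u) \<in> (adj_rel G)\<^sup>*"
proof -
  assume u: "u < 3*m"
  consider "u < m" | "m \<le> u \<and> u < 2*m" | "2*m \<le> u" by linarith
  then show ?thesis
  proof cases
    case 1 then show ?thesis using reach_left by simp
  next
    case 2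
    then have "m + (u-m) = u" "u - m < m" by auto
    then show ?thesis using reach_right[of "u-m"] by simp
  next
    case 3
    define i where "i = u - 2*m"
    have im: "i < m" and uu: "u = 2*m+i" using 3 u i_def by auto
    have "fst (gport G i (p!i)) = u" using uu im by (simp add: gpl_left)
    then have "(i, u) \<in> adj_rel G" using adj[of i "p!i"] im pm by simp
    then show ?thesis using reach_left[OF im] by simp
  qed
qed

lemma valid: "valid_pgraph G"
proof -
  have sym: "sym (adj_rel G)" using adj_sym by (auto intro: symI)
  have conn: "(u, w) \<in> (adj_rel G)\<^sup>*" if "u < 3*m" "w < 3*m" for u w
  proof -
    have "(u, 0) \<in> (adj_rel G)\<^sup>*" using reach_all[OF that(1)] sym_rtrancl[OF sym]
      by (meson symD)
    then show ?thesis using reach_all[OF that(2)] by simp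
  qed
  show ?thesis unfolding valid_pgraph_def using inv_all simple_all conn by auto
qed

end




lemma walk_Suc': "walk A x G v (Suc k) =
  (case A x (gdeg G v) (snd (walk A x G v k)) of None \<Rightarrow> walk A x G v k
   | Some c \<Rightarrow> if c < gdeg G (fst (walk A x G v k))
       then (fst (gport G (fst (walk A x G v k)) c),
             snd (walk A x G v k) @ [(c, snd (gport G (fst (walk A x G v k)) c), gdeg G (fst (gport G (fst (walk A x G v k)) c)))])
       else walk A x G v k)"
  by (cases "walk A x G v k") (simp split: option.splits)

declare walk.simps(2)[simp del]

lemma walk_bound: "valid_pgraph G \<Longrightarrow> v < gsize G \<Longrightarrow> fst (walk A x G v k) < gsize G"
  by (induction k) (auto simp: walk_Suc' valid_pgraph_def simp del: walk.simps(2) split: option.splits)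

lemma moved: "fst (walk A x G v (Suc j)) \<noteq> fst (walk A x G v j) \<Longrightarrow>
  \<exists>c. A x (gdeg G v) (snd (walk A x G v j)) = Some c \<and> c < gdeg G (fst (walk A x G v j)) \<and>
      fst (walk A x G v (Suc j)) = fst (gport G (fst (walk A x G v j)) c)"
  by (auto simp: walk_Suc' simp del: walk.simps split: option.splits if_splits)

definition idx :: "nat \<Rightarrow> nat \<Rightarrow> nat \<Rightarrow> nat" where
  "idx m u c = (if u < m then u else (c + m - (u - m)) mod m)"

context gpl begin

lemma lemM: assumes "u < 3*m" "c < gdeg G u" "2*m \<le> fst (gport G u c)"
  shows "u < 2*m \<and> c = p!(idx m u c) \<and> fst (gport G u c) = 2*m + idx m u c"
proof -
  consider "u < m" | "m \<le> u \<and> u < 2*m" | "2*m \<le> u" by linarith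
  then show ?thesis
  proof cases
    case 1
    have lt: "(c + m - u) mod m < m" using modlt1 by simp
    show ?thesis
    proof (cases "c = p!u")
      case True then show ?thesis using 1 by (simp add: gpl_left idx_def)
    next
      case False
      then have "fst (gport G u c) = m + (c + m - u) mod m" using 1 by (simp add: gpl_left)
      then show ?thesis using lt assms by simp
    qed
  next
    case 2
    define i where "i = (c + m - (u - m)) mod m"
    have lt: "i < m" using modlt1 i_def by simp
    have ii: "idx m u c = i" using 2 i_def idx_def by simp
    have h0: "gport G u c = (if c = p!i then (2*m+i, 1) else (i, c))"
      using 2 by (simp only: gpl_right i_def)
    show ?thesis
    proof (cases "c = p!i")
      case True then show ?thesis using 2 h0 ii by simp
    next
      case False
      then show ?thesis using h0 lt assms by simp
    qed
  next
    case 3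
    define i where "i = u - 2*m"
    have lt: "(p ! i + m - i) mod m < m" using modlt1 by simp
    have "fst (gport G u c) < 2*m"
    proof (cases "c = 0")
      case True then show ?thesis using 3 assms i_def by (simp add: gpl_sub)
    next
      case False
      then have "fst (gport G u c) = m + (p ! i + m - i) mod m" using 3 by (simp add: gpl_sub i_def)
      then show ?thesis using lt by simp
    qed
    then show ?thesis using assms by simp
  qed
qed

end

lemma gport_same1: "u < 2*m \<Longrightarrow> (c = p!(idx m u c) \<longleftrightarrow> c = q!(idx m u c)) \<Longrightarrow>
   gport (gp m p) u c = gport (gp m q) u c"
  by (cases "u < m") (simp_all add: gp_def idx_def)

lemma gport_same2: "\<not> u < 2*m \<Longrightarrow> p!(u - 2*m) = q!(u-2*m) \<Longrightarrow>
   gport (gp m p) u c = gport (gp m q) u c"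
  by (simp add: gp_def)

lemma gdeg_same: "gdeg (gp m p) = gdeg (gp m q)" by (simp add: gp_def)

abbreviation W where "W A x m p k \<equiv> walk A x (gp m p) 0 k"

definition Ep :: "algorithm \<Rightarrow> bool list \<Rightarrow> nat \<Rightarrow> nat list \<Rightarrow> nat set" where
  "Ep A x m p = {k. 2*m \<le> fst (W A x m p (Suc k)) \<and> (\<forall>j\<le>k. fst (W A x m p j) \<noteq> fst (W A x m p (Suc k)))}"

lemma lemV:
  assumes P: "gpl m p" and Q: "gpl m q"
    and eq: "\<forall>j\<le>k. W A x m p j = W A x m q j" and j0: "j0 \<le> k"
    and pj0: "fst (W A x m p j0) = 2*m + i" and im: "i < m"
  shows "p!i = q!i"
proof -
  have mpos: "0 < m" using P gpl.mpos by auto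
  define j where "j = (LEAST j. fst (W A x m p j) = 2*m + i)"
  have pj: "fst (W A x m p j) = 2*m+i" unfolding j_def by (rule LeastI[of _ j0], rule pj0)
  have jj0: "j \<le> j0" unfolding j_def by (rule Least_le, rule pj0)
  have "j \<noteq> 0"
  proof
    assume "j = 0"
    then have "fst (W A x m p j) = 0" by simp
    then show False using pj mpos by simp
  qed
  then obtain j' where jS: "j = Suc j'" using not0_implies_Suc by blast
  have nj: "fst (W A x m p j') \<noteq> 2*m+i"
  proof
    assume "fst (W A x m p j') = 2*m+i"
    then have "j \<le> j'" unfolding j_def by (rule Least_le)
    then show False using jS by simp
  qed
  have mv: "fst (W A x m p (Suc j')) \<noteq> fst (W A x m p j')" using nj pj jS by simp
  obtain c where c1: "A x (gdeg (gp m p) 0) (snd (W A x m p j')) = Some c"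
     and c2: "c < gdeg (gp m p) (fst (W A x m p j'))"
     and c3: "fst (W A x m p (Suc j')) = fst (gport (gp m p) (fst (W A x m p j')) c)"
    using moved[OF mv] by blast
  have vp: "valid_pgraph (gp m p)" using P gpl.valid by blast
  have gs: "gsize (gp m p) = 3*m" using P gpl.gsz by blast
  have bnd: "fst (W A x m p j') < 3*m"
    using walk_bound[OF vp, of 0 A x j'] mpos gs by simp
  have pS: "fst (W A x m p (Suc j')) = 2*m+i" using pj jS by simp
  have M1: "c = p!(idx m (fst (W A x m p j')) c) \<and> fst (gport (gp m p) (fst (W A x m p j')) c) = 2*m + idx m (fst (W A x m p j')) c"
    using gpl.lemM[OF P bnd c2] c3 pS by simp
  have ii: "idx m (fst (W A x m p j')) c = i" using M1 c3 pS by simp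
  have e1: "W A x m q j' = W A x m p j'" using eq jS jj0 j0 by simp
  have e2: "W A x m q (Suc j') = W A x m p (Suc j')" using eq jS jj0 j0 by simp
  have gd: "gdeg (gp m q) = gdeg (gp m p)" by (rule gdeg_same)
  have c1': "A x (gdeg (gp m q) 0) (snd (W A x m q j')) = Some c" using c1 e1 gd by simp
  have c2': "c < gdeg (gp m q) (fst (W A x m q j'))" using c2 e1 gd by simp
  have c3': "fst (W A x m q (Suc j')) = fst (gport (gp m q) (fst (W A x m q j')) c)"
    using c1' c2' by (simp add: walk_Suc' del: walk.simps)
  have bnd': "fst (W A x m q j') < 3*m" using bnd e1 by simp
  have c4: "2*m \<le> fst (gport (gp m q) (fst (W A x m q j')) c)" using c3' e2 pS by simp
  have M2: "c = q!(idx m (fst (W A x m q j')) c)"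
    using gpl.lemM[OF Q bnd' c2' c4] by simp
  show ?thesis using M1 M2 ii e1 by simp
qed




context gpl begin
lemma sub_hit: "u < 2*m \<Longrightarrow> c = p!(idx m u c) \<Longrightarrow> fst (gport G u c) = 2*m + idx m u c"
  by (cases "u < m") (simp_all add: gp_def idx_def)
lemma idx_lt: "u < 2*m \<Longrightarrow> idx m u c < m"
  using mpos by (simp add: idx_def)
end

lemma lemD:
  assumes P: "gpl m p" and Q: "gpl m q"
    and eq: "\<forall>j\<le>k. W A x m p j = W A x m q j" and EE: "Ep A x m p = Ep A x m q"
    and u: "fst (W A x m p k) < 2*m"
    and cA: "A x (gdeg (gp m p) 0) (snd (W A x m p k)) = Some c"
    and cd: "c < gdeg (gp m p) (fst (W A x m p k))"
    and hit: "c = p!(idx m (fst (W A x m p k)) c)"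
  shows "c = q!(idx m (fst (W A x m p k)) c)"
proof -
  define u where "u = fst (W A x m p k)"
  define i where "i = idx m u c"
  have im: "i < m" using gpl.idx_lt[OF P] u u_def i_def by simp
  have g1: "fst (gport (gp m p) u c) = 2*m + i" using gpl.sub_hit[OF P] u hit u_def i_def by simp
  have pS: "fst (W A x m p (Suc k)) = 2*m + i"
    using cA cd g1 u_def by (simp add: walk_Suc')
  show ?thesis
  proof (cases "\<exists>j\<le>k. fst (W A x m p j) = 2*m+i")
    case True
    then obtain j where "j \<le> k" "fst (W A x m p j) = 2*m+i" by blast
    then have "p!i = q!i" using lemV[OF P Q eq] im by blast
    then show ?thesis using hit u_def i_def by simp
  next
    case False
    then have "k \<in> Ep A x m p" unfolding Ep_def using pS by auto
    then have "k \<in> Ep A x m q" using EE by simp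
    then have ge: "2*m \<le> fst (W A x m q (Suc k))" unfolding Ep_def by simp
    have wk: "W A x m q k = W A x m p k" using eq by simp
    have gd: "gdeg (gp m q) = gdeg (gp m p)" by (rule gdeg_same)
    have cA': "A x (gdeg (gp m q) 0) (snd (W A x m q k)) = Some c" using cA wk gd by simp
    have cd': "c < gdeg (gp m q) (fst (W A x m q k))" using cd wk gd by simp
    have qS: "fst (W A x m q (Suc k)) = fst (gport (gp m q) u c)"
      using cA' cd' wk u_def by (simp add: walk_Suc')
    have mpos: "0 < m" using P gpl.mpos by auto
    have u3: "u < 3*m" using u u_def by simp
    have cd'': "c < gdeg (gp m q) u" using cd' wk u_def by simp
    have "c = q!(idx m u c)" using gpl.lemM[OF Q u3 cd''] ge qS by simp
    then show ?thesis using u_def by simp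
  qed
qed

lemma same_walk:
  assumes P: "gpl m p" and Q: "gpl m q" and EE: "Ep A x m p = Ep A x m q"
  shows "\<forall>j\<le>k. W A x m p j = W A x m q j"
proof (induction k)
  case 0 then show ?case by simp
next
  case (Suc k)
  have mpos: "0 < m" using P gpl.mpos by auto
  have vp: "valid_pgraph (gp m p)" using P gpl.valid by blast
  have gs: "gsize (gp m p) = 3*m" using P gpl.gsz by blast
  have bnd: "fst (W A x m p k) < 3*m"
    using walk_bound[OF vp, of 0 A x k] mpos gs by simp
  have wk: "W A x m q k = W A x m p k" using Suc by simp
  have gd: "gdeg (gp m q) = gdeg (gp m p)" by (rule gdeg_same)
  have step: "W A x m p (Suc k) = W A x m q (Suc k)"
  proof (cases "A x (gdeg (gp m p) 0) (snd (W A x m p k))")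
    case None
    then show ?thesis using wk gd by (simp add: walk_Suc')
  next
    case (Some c)
    show ?thesis
    proof (cases "c < gdeg (gp m p) (fst (W A x m p k))")
      case False
      then show ?thesis using Some wk gd by (simp add: walk_Suc')
    next
      case True
      define u where "u = fst (W A x m p k)"
      have gp_eq: "gport (gp m p) u c = gport (gp m q) u c"
      proof (cases "u < 2*m")
        case True': True
        have d1: "c = p!(idx m u c) \<Longrightarrow> c = q!(idx m u c)"
          using lemD[OF P Q Suc.IH EE] True' Some True u_def by simp
        have Suc': "\<forall>j\<le>k. W A x m q j = W A x m p j" using Suc.IH by simp
        have d2: "c = q!(idx m u c) \<Longrightarrow> c = p!(idx m u c)"
          using lemD[OF Q P Suc' EE[symmetric]] True' Some True u_def wk gd by simp
        show ?thesis using gport_same1[OF True'] d1 d2 by blast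
      next
        case False
        have "p!(u - 2*m) = q!(u - 2*m)"
          using lemV[OF P Q Suc.IH, of k "u - 2*m"] False bnd u_def by simp
        then show ?thesis using gport_same2[OF False] by blast
      qed
      show ?thesis using Some True wk gd gp_eq u_def by (simp add: walk_Suc')
    qed
  qed
  show ?case using Suc.IH step le_Suc_eq by auto
qed




lemma visit:
  assumes P: "gpl m p" and comp: "completes_exploration A x (gp m p) 0 t" and im: "i < m"
  shows "\<exists>k\<le>t. fst (W A x m p k) = 2*m+i"
proof -
  have "2*m+i \<in> {0..<gsize (gp m p)}" using im P gpl.gsz by simp
  moreover have sub: "{0..<gsize (gp m p)} \<subseteq> {fst (W A x m p k) | k. k \<le> t}"
    using comp unfolding completes_exploration_def by (elim conjE)
  ultimately have "2*m+i \<in> {fst (W A x m p k) | k. k \<le> t}" by (rule rev_subsetD)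
  then show ?thesis by auto
qed

lemma Ep_sub:
  assumes P: "gpl m p" and comp: "completes_exploration A x (gp m p) 0 t"
  shows "Ep A x m p \<subseteq> {..<t}"
proof
  fix k assume k: "k \<in> Ep A x m p"
  have mpos: "0 < m" using P gpl.mpos by auto
  have vp: "valid_pgraph (gp m p)" using P gpl.valid by blast
  have gs: "gsize (gp m p) = 3*m" using P gpl.gsz by blast
  have bnd: "fst (W A x m p (Suc k)) < 3*m"
    using walk_bound[OF vp, of 0 A x "Suc k"] mpos gs by simp
  have ge: "2*m \<le> fst (W A x m p (Suc k))" and nv: "\<forall>j\<le>k. fst (W A x m p j) \<noteq> fst (W A x m p (Suc k))"
    using k unfolding Ep_def by auto
  have "fst (W A x m p (Suc k)) \<in> {0..<gsize (gp m p)}" using bnd gs by simp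
  moreover have sub: "{0..<gsize (gp m p)} \<subseteq> {fst (W A x m p k) | k. k \<le> t}"
    using comp unfolding completes_exploration_def by (elim conjE)
  ultimately have "fst (W A x m p (Suc k)) \<in> {fst (W A x m p k) | k. k \<le> t}" by (rule rev_subsetD)
  then obtain k' where k': "k' \<le> t" "fst (W A x m p k') = fst (W A x m p (Suc k))"
    by auto
  have "\<not> k' \<le> k" using nv k' by blast
  then show "k \<in> {..<t}" using k' by simp
qed

lemma Ep_card:
  assumes P: "gpl m p" and comp: "completes_exploration A x (gp m p) 0 t"
  shows "card (Ep A x m p) = m"
proof -
  have mpos: "0 < m" using P gpl.mpos by auto
  have vp: "valid_pgraph (gp m p)" using P gpl.valid by blast
  have gs: "gsize (gp m p) = 3*m" using P gpl.gsz by blast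
  have bnd: "\<And>k. fst (W A x m p k) < 3*m"
    using walk_bound[OF vp, of 0 A x] mpos gs by simp
  define f where "f = (\<lambda>k. fst (W A x m p (Suc k)) - 2*m)"
  have inj: "inj_on f (Ep A x m p)"
  proof (rule inj_onI)
    fix a b assume a: "a \<in> Ep A x m p" and b: "b \<in> Ep A x m p" and fab: "f a = f b"
    have ga: "2*m \<le> fst (W A x m p (Suc a))" and na: "\<forall>j\<le>a. fst (W A x m p j) \<noteq> fst (W A x m p (Suc a))"
      using a unfolding Ep_def by auto
    have gb: "2*m \<le> fst (W A x m p (Suc b))" and nb: "\<forall>j\<le>b. fst (W A x m p j) \<noteq> fst (W A x m p (Suc b))"
      using b unfolding Ep_def by auto
    have same: "fst (W A x m p (Suc a)) = fst (W A x m p (Suc b))" using fab ga gb f_def by simp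
    show "a = b"
    proof (rule ccontr)
      assume "a \<noteq> b"
      then consider "Suc a \<le> b" | "Suc b \<le> a" by linarith
      then show False
      proof cases
        case 1 then show False using nb same by blast
      next
        case 2 then show False using na same by (metis Suc_leD)
      qed
    qed
  qed
  have img: "f ` Ep A x m p = {..<m}"
  proof
    show "f ` Ep A x m p \<subseteq> {..<m}"
    proof
      fix y assume "y \<in> f ` Ep A x m p"
      then obtain k where "y = f k" by blast
      then show "y \<in> {..<m}" using bnd[of "Suc k"] f_def by auto
    qed
  next
    show "{..<m} \<subseteq> f ` Ep A x m p"
    proof
      fix i assume "i \<in> {..<m}"
      then have im: "i < m" by simp
      obtain k0 where k0: "fst (W A x m p k0) = 2*m+i" using visit[OF P comp im] by blast
      define j where "j = (LEAST j. fst (W A x m p j) = 2*m + i)"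
      have pj: "fst (W A x m p j) = 2*m+i" unfolding j_def by (rule LeastI[of _ k0], rule k0)
      have "j \<noteq> 0"
      proof
        assume "j = 0"
        then have "fst (W A x m p j) = 0" by simp
        then show False using pj mpos by simp
      qed
      then obtain j' where jS: "j = Suc j'" using not0_implies_Suc by blast
      have nj: "\<forall>l\<le>j'. fst (W A x m p l) \<noteq> 2*m+i"
      proof (intro allI impI)
        fix l assume "l \<le> j'"
        show "fst (W A x m p l) \<noteq> 2*m+i"
        proof
          assume "fst (W A x m p l) = 2*m+i"
          then have "j \<le> l" unfolding j_def by (rule Least_le)
          then show False using jS \<open>l \<le> j'\<close> by simp
        qed
      qed
      have "j' \<in> Ep A x m p" unfolding Ep_def using pj jS nj by simp
      moreover have "i = f j'" using pj jS f_def by simp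
      ultimately show "i \<in> f ` Ep A x m p" by (intro image_eqI)
    qed
  qed
  have "card (f ` Ep A x m p) = card (Ep A x m p)" by (rule card_image[OF inj])
  then show ?thesis unfolding img by simp
qed

lemma inj_p:
  assumes P: "gpl m p" and Q: "gpl m q"
    and cp: "completes_exploration A x (gp m p) 0 t1"
    and EE: "Ep A x m p = Ep A x m q"
  shows "p = q"
proof (rule nth_equalityI)
  show "length p = length q" using gpl.lenp[OF P] gpl.lenp[OF Q] by simp
  fix i assume "i < length p"
  then have im: "i < m" using gpl.lenp[OF P] by simp
  obtain k where k: "k \<le> t1" "fst (W A x m p k) = 2*m+i" using visit[OF P cp im] by blast
  have sw: "\<forall>j\<le>k. W A x m p j = W A x m q j" using same_walk[OF P Q EE] by blast
  show "p!i = q!i" by (rule lemV[OF P Q sw order.refl k(2) im])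
qed




lemma pow_fact: "real m ^ m \<le> 3^m * fact m"
proof -
  have s: "(\<lambda>n. real m ^ n / fact n) sums exp (real m)"
    using exp_converges[of "real m"] by (simp add: divide_inverse mult.commute)
  have "sum (\<lambda>n. real m ^ n / fact n) {m} \<le> suminf (\<lambda>n. real m ^ n / fact n)"
    by (rule sum_le_suminf) (use s sums_summable in auto)
  then have "real m ^ m / fact m \<le> exp (real m)" using sums_unique[OF s] by simp
  also have "exp (real m) = exp 1 ^ m" using exp_of_nat_mult[of m 1] by simp
  also have "\<dots> \<le> 3^m" by (rule power_mono[OF exp_le]) simp
  finally show ?thesis by (simp add: divide_le_eq)
qed

lemma geo: "(\<Sum>i\<le>L. (2::nat)^i) < 2^Suc L"
  by (induction L) auto

lemma num:
  fixes m T L K :: nat and c :: real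
  assumes c: "c = 1/(40*8^K)" and L: "L = 3*K*m" and T: "real T \<le> c*(3*real m)^2 + 1"
    and m3: "3 \<le> m" and mc: "1/c \<le> real m"
    and ineq: "m^m \<le> (\<Sum>i\<le>L. (2::nat)^i) * (T choose m)"
  shows False
proof -
  have cpos: "0 < c" using c by simp
  have a1: "m^m \<le> 2^Suc L * (T choose m)"
    using ineq geo[of L] by (meson less_imp_le_nat mult_le_mono1 order_trans)
  have a2: "m^m * fact m \<le> 2^Suc L * T^m"
  proof -
    have "m^m * fact m \<le> 2^Suc L * (T choose m) * fact m" using a1 by simp
    also have "\<dots> = 2^Suc L * ((T choose m) * fact m)" by simp
    also have "\<dots> \<le> 2^Suc L * T^m" using binomial_fact_pow[of T m] by simp
    finally show ?thesis .
  qed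
  have a3: "real m ^ m * fact m \<le> 2^Suc L * real T ^ m"
    using a2 by (metis (mono_tags, lifting) of_nat_fact of_nat_le_iff of_nat_mult of_nat_numeral of_nat_power)
  have mpos: "0 < real m" using m3 by simp
  have cm: "1 \<le> c * real m" using mc cpos by (simp add: divide_le_eq mult.commute)
  have cm2: "1 \<le> c * real m ^ 2"
  proof -
    have m1: "1 \<le> real m" using m3 by simp
    have "c * real m * 1 \<le> c * real m * real m" by (rule mult_left_mono[OF m1]) (use cm in auto)
    then show ?thesis using cm by (simp add: power2_eq_square mult.assoc)
  qed
  have T10: "real T \<le> 10 * c * real m ^ 2" using T cm2 by (simp add: power_mult_distrib)
  have b1: "(real m ^ 2) ^ m \<le> 3^m * 2^Suc L * real T ^ m"
  proof -
    have "(real m ^ 2) ^ m = real m ^ m * real m ^ m" by (simp add: power_mult power2_eq_square power_mult_distrib)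
    also have "\<dots> \<le> (3^m * fact m) * real m ^ m"
      using pow_fact[of m] by (simp add: mult_right_mono)
    also have "\<dots> = 3^m * (real m ^ m * fact m)" by simp
    also have "\<dots> \<le> 3^m * (2^Suc L * real T ^ m)" using a3 by simp
    finally show ?thesis by simp
  qed
  have two: "(2::real)^Suc L = 2 * (8^K)^m"
  proof -
    have "(2::real)^L = (2^3)^(K*m)" using L by (simp add: power_mult mult.assoc)
    also have "\<dots> = (8^K)^m" by (simp add: power_mult)
    finally show ?thesis by simp
  qed
  have b2: "3^m * (8^K)^m * real T ^ m \<le> ((3/4) * real m ^ 2)^m"
  proof -
    have "3 * 8^K * real T \<le> 3 * 8^K * (10 * c * real m ^ 2)" using T10 by simp
    also have "\<dots> = (3/4) * real m ^ 2" using c by simp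
    finally have "3 * 8^K * real T \<le> (3/4) * real m ^ 2" .
    then have "(3 * 8^K * real T) ^ m \<le> ((3/4) * real m ^ 2)^m" by (rule power_mono) simp
    then show ?thesis by (simp add: power_mult_distrib)
  qed
  have b3: "(real m ^ 2) ^ m \<le> 2 * ((3/4) * real m ^ 2)^m"
  proof -
    have "(real m ^ 2) ^ m \<le> 3^m * 2^Suc L * real T ^ m" by (rule b1)
    also have "\<dots> = 2 * (3^m * (8^K)^m * real T ^ m)" using two by simp
    also have "\<dots> \<le> 2 * ((3/4) * real m ^ 2)^m" using b2 by simp
    finally show ?thesis .
  qed
  have pp: "0 < (real m ^ 2) ^ m" using mpos by simp
  have eqq: "2 * ((3/4) * real m ^ 2)^m = (2 * (3/4)^m) * (real m ^ 2) ^ m"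
    by (simp only: power_mult_distrib mult.assoc)
  have "(real m ^ 2) ^ m \<le> (2 * (3/4)^m) * (real m ^ 2) ^ m" using b3 unfolding eqq .
  then have "1 \<le> 2 * (3/4::real)^m" using pp by simp
  moreover have "(3/4::real)^m \<le> (3/4)^3" by (rule power_decreasing[OF m3]) auto
  moreover have "(3/4::real)^3 = 27/64" by (simp add: power3_eq_cube)
  ultimately show False by linarith
qed




theorem mainTheorem9:
  fixes f :: "pgraph \<Rightarrow> nat \<Rightarrow> bool list" and A :: algorithm
  assumes "\<exists>C::real. \<exists>N. \<forall>n \<ge> N. \<forall>G v. valid_pgraph G \<and> gsize G = n \<and> v < n
                 \<longrightarrow> real (length (f G v)) \<le> C * real n"
  shows "\<exists>c::real > 0. \<forall>N. \<exists>n \<ge> N. \<exists>G v. valid_pgraph G \<and> gsize G = n \<and> v < n \<and>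
           (\<forall>t. completes_exploration A (f G v) G v t \<longrightarrow> real t \<ge> c * real n ^ 2)"
proof -
  obtain C N1 where hC: "\<And>n G v. n \<ge> N1 \<Longrightarrow> valid_pgraph G \<Longrightarrow> gsize G = n \<Longrightarrow> v < n
                 \<Longrightarrow> real (length (f G v)) \<le> C * real n"
    using assms by blast
  obtain K :: nat where CK: "C \<le> real K" using real_arch_simple by blast
  define c :: real where "c = 1/(40*8^K)"
  have cpos: "0 < c" using c_def by simp
  show ?thesis
  proof (rule ccontr)
    assume neg: "\<not> ?thesis"
    then obtain N2 where hN2: "\<And>n G v. n \<ge> N2 \<Longrightarrow> valid_pgraph G \<Longrightarrow> gsize G = n \<Longrightarrow> v < n \<Longrightarrow>
        \<exists>t. completes_exploration A (f G v) G v t \<and> real t < c * real n ^ 2"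
      using cpos by (metis not_le)
    define m where "m = N1 + N2 + nat \<lceil>1/c\<rceil> + 3"
    have m3: "3 \<le> m" using m_def by simp
    have mc: "1/c \<le> real m"
    proof -
      have "1/c \<le> real (nat \<lceil>1/c\<rceil>)" by linarith
      then show ?thesis unfolding m_def by simp
    qed
    have mpos: "0 < m" using m3 by simp
    define n where "n = 3*m"
    have nN1: "n \<ge> N1" and nN2: "n \<ge> N2" using n_def m_def by auto
    define S where "S = {p. set p \<subseteq> {..<m} \<and> length p = m}"
    have gS: "gpl m p" if "p \<in> S" for p
      using that mpos unfolding S_def gpl_def by (auto dest: nth_mem)
    define L where "L = 3*K*m"
    define T where "T = nat \<lceil>c * real n ^ 2\<rceil>"
    have TT: "real T \<le> c*(3*real m)^2 + 1"
    proof -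
      have y0: "0 \<le> c * real n ^ 2" using cpos by simp
      have "real T = of_int \<lceil>c * real n ^ 2\<rceil>" unfolding T_def using y0 by simp
      also have "\<dots> \<le> c * real n ^ 2 + 1" by (rule of_int_ceiling_le_add_one)
      finally show ?thesis unfolding n_def by simp
    qed
    define \<phi> where "\<phi> = (\<lambda>p. (f (gp m p) 0, Ep A (f (gp m p) 0) m p))"
    define Lst where "Lst = {xs::bool list. set xs \<subseteq> UNIV \<and> length xs \<le> L}"
    define Sub where "Sub = {E. E \<subseteq> {..<T} \<and> card E = m}"
    have comp: "\<exists>t. completes_exploration A (f (gp m p) 0) (gp m p) 0 t \<and> real t < c * real n ^ 2"
      if "p \<in> S" for p
    proof -
      have "valid_pgraph (gp m p)" using gpl.valid[OF gS[OF that]] .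
      moreover have "gsize (gp m p) = n" using gpl.gsz[OF gS[OF that]] n_def by simp
      ultimately show ?thesis using hN2[OF nN2] mpos n_def by simp
    qed
    have img: "\<phi> ` S \<subseteq> Lst \<times> Sub"
    proof
      fix y assume "y \<in> \<phi> ` S"
      then obtain p where pS: "p \<in> S" and y: "y = \<phi> p" by blast
      have P: "gpl m p" using gS[OF pS] .
      have vp: "valid_pgraph (gp m p)" using gpl.valid[OF P] .
      have gs: "gsize (gp m p) = n" using gpl.gsz[OF P] n_def by simp
      have "real (length (f (gp m p) 0)) \<le> C * real n" using hC[OF nN1 vp gs] mpos n_def by simp
      also have "\<dots> \<le> real K * real n" using CK by (simp add: mult_right_mono)
      finally have "length (f (gp m p) 0) \<le> L" unfolding L_def n_def
        by (metis (mono_tags, lifting) mult.assoc mult.commute of_nat_le_iff of_nat_mult)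
      then have l1: "f (gp m p) 0 \<in> Lst" unfolding Lst_def by simp
      obtain t where t: "completes_exploration A (f (gp m p) 0) (gp m p) 0 t" "real t < c * real n ^ 2"
        using comp[OF pS] by blast
      have "t < T" using t(2) unfolding T_def by linarith
      then have "Ep A (f (gp m p) 0) m p \<subseteq> {..<T}" using Ep_sub[OF P t(1)] by auto
      moreover have "card (Ep A (f (gp m p) 0) m p) = m" using Ep_card[OF P t(1)] .
      ultimately have "Ep A (f (gp m p) 0) m p \<in> Sub" unfolding Sub_def by simp
      then show "y \<in> Lst \<times> Sub" using l1 y \<phi>_def by simp
    qed
    have inj: "inj_on \<phi> S"
    proof (rule inj_onI)
      fix p q assume pS: "p \<in> S" and qS: "q \<in> S" and e: "\<phi> p = \<phi> q"
      have x: "f (gp m q) 0 = f (gp m p) 0" using e \<phi>_def by simp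
      have EE: "Ep A (f (gp m p) 0) m p = Ep A (f (gp m p) 0) m q" using e x \<phi>_def by simp
      obtain t where t: "completes_exploration A (f (gp m p) 0) (gp m p) 0 t"
        using comp[OF pS] by blast
      show "p = q" by (rule inj_p[OF gS[OF pS] gS[OF qS] t EE])
    qed
    have fin: "finite (Lst \<times> Sub)"
    proof -
      have "finite Lst" unfolding Lst_def by (rule finite_lists_length_le) simp
      moreover have "finite Sub" unfolding Sub_def by simp
      ultimately show ?thesis by simp
    qed
    have "card S \<le> card (Lst \<times> Sub)" by (rule card_inj_on_le[OF inj img fin])
    moreover have "card S = m^m"
    proof -
      have "card S = card {xs. set xs \<subseteq> {..<m} \<and> length xs = m}" unfolding S_def by simp
      also have "\<dots> = card {..<m} ^ m" by (rule card_lists_length_eq) simp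
      finally show ?thesis by simp
    qed
    moreover have "card (Lst \<times> Sub) = (\<Sum>i\<le>L. (2::nat)^i) * (T choose m)"
    proof -
      have "card Lst = (\<Sum>i\<le>L. card (UNIV::bool set)^i)" unfolding Lst_def
        by (rule card_lists_length_le) simp
      then have c1: "card Lst = (\<Sum>i\<le>L. (2::nat)^i)" by simp
      have c2: "card Sub = card {..<T} choose m" unfolding Sub_def by (rule n_subsets) simp
      show ?thesis using c1 c2 by (simp add: card_cartesian_product)
    qed
    ultimately have ineq: "m^m \<le> (\<Sum>i\<le>L. (2::nat)^i) * (T choose m)" by simp
    show False by (rule num[OF c_def L_def TT m3 mc ineq])
  qed
qed


end
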